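(* Consider the Hamiltonian $H:\mathbb{R}^4\to\mathbb{R}$, with coordinates $(\boldsymbol{y},\boldsymbol{p})=(y_1,y_2,p_1,p_2)$, given by \[ H(\boldsymbol{y},\boldsymbol{p})= p_{1}\,y_{2} -\frac{p_{2}\left(\frac{\sin(y_{1})}{3}+\frac{y_{2}^2\,\sin(2y_{1})}{2}\right)}{\sin^2(y_{1})+\frac{1}{3}} -\frac{p_{2}^2\,\cos^2(y_{1})}{18\left(\sin^2(y_{1})+\frac{1}{3}\right)^2}, \] and the associated Hamiltonian system \[ \frac{d\boldsymbol{y}}{dt}=\frac{\partial H}{\partial \boldsymbol{p}},\qquad \frac{d\boldsymbol{p}}{dt}=-\frac{\partial H}{\partial\boldsymbol{y}}. \] Then the equilibrium $(\boldsymbol{y},\boldsymbol{p})=(0,0,0,0)$ of this system is unstable (in the sense of Lyapunov).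
   Context: This Hamiltonian is the (parameter-normalized) Hamiltonian of the Hamilton–Jacobi equation for the infinite-horizon optimal control problem of minimizing $\int_0^\infty u(t)^2\,dt$ for a pendulum swing-up, written in coordinates centered at the pending (downward) equilibrium. The origin is an equilibrium of the Hamiltonian system; the linearization there has Hamiltonian matrix $\begin{bmatrix}0&1&0&0\\-1&0&0&-1\\0&0&0&1\\0&0&-1&0\end{bmatrix}$ with eigenvalues $\pm j,\pm j$ (each of multiplicity two). Instability means: there exists a neighborhood $U$ of the origin such that for every neighborhood $W$ of the origin there is an initial condition in $W$ whose trajectory leaves $U$. *)

theory Defs
  imports "HOL-Analysis.Analysis"
begin

definition H :: "real \<Rightarrow> real \<Rightarrow> real \<Rightarrow> real \<Rightarrow> real" where
  "H y1 y2 p1 p2 =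
     p1 * y2
     - p2 * (sin y1 / 3 + y2 ^ 2 * sin (2 * y1) / 2) / ((sin y1)\<^sup>2 + 1 / 3)
     - p2 ^ 2 * (cos y1)\<^sup>2 / (18 * ((sin y1)\<^sup>2 + 1 / 3) ^ 2)"

definition dH_dy1 :: "real \<Rightarrow> real \<Rightarrow> real \<Rightarrow> real \<Rightarrow> real" where
  "dH_dy1 y1 y2 p1 p2 = deriv (\<lambda>s. H s y2 p1 p2) y1"
definition dH_dy2 :: "real \<Rightarrow> real \<Rightarrow> real \<Rightarrow> real \<Rightarrow> real" where
  "dH_dy2 y1 y2 p1 p2 = deriv (\<lambda>s. H y1 s p1 p2) y2"
definition dH_dp1 :: "real \<Rightarrow> real \<Rightarrow> real \<Rightarrow> real \<Rightarrow> real" where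
  "dH_dp1 y1 y2 p1 p2 = deriv (\<lambda>s. H y1 y2 s p2) p1"
definition dH_dp2 :: "real \<Rightarrow> real \<Rightarrow> real \<Rightarrow> real \<Rightarrow> real" where
  "dH_dp2 y1 y2 p1 p2 = deriv (\<lambda>s. H y1 y2 p1 s) p2"

definition ham_field :: "real \<times> real \<times> real \<times> real \<Rightarrow> real \<times> real \<times> real \<times> real" where
  "ham_field z = (case z of (y1, y2, p1, p2) \<Rightarrow>
     (dH_dp1 y1 y2 p1 p2, dH_dp2 y1 y2 p1 p2, - dH_dy1 y1 y2 p1 p2, - dH_dy2 y1 y2 p1 p2))"

definition ham_solution :: "(real \<Rightarrow> real \<times> real \<times> real \<times> real) \<Rightarrow> real \<Rightarrow> bool" where
  "ham_solution x T \<longleftrightarrow>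
     (\<forall>t\<in>{0..T}. (x has_vector_derivative ham_field (x t)) (at t within {0..T}))"

end

theory Submission
  imports Defs
begin

fun picard_it :: "('a::banach \<Rightarrow> 'a) \<Rightarrow> 'a \<Rightarrow> nat \<Rightarrow> real \<Rightarrow> 'a" where
  "picard_it G z0 0 = (\<lambda>t. z0)"
| "picard_it G z0 (Suc n) = (\<lambda>t. z0 + integral {0..t} (\<lambda>s. G (picard_it G z0 n s)))"

lemma picard_exists:
  fixes G :: "'a::banach \<Rightarrow> 'a"
  assumes L: "\<And>z w. norm (G z - G w) \<le> L * norm (z - w)" and L0: "L \<ge> 0"
    and B: "\<And>z. norm (G z) \<le> B" and T0: "T \<ge> 0"
  shows "\<exists>x. x 0 = z0 \<and> (\<forall>t\<in>{0..T}. (x has_vector_derivative G (x t)) (at t within {0..T}))"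
proof -
  define P where "P = picard_it G z0"
  have Gc: "continuous_on S G" for S
  proof -
    have "L-lipschitz_on UNIV G"
      using L L0 by (auto intro!: lipschitz_onI simp: dist_norm)
    then show ?thesis
      using lipschitz_on_continuous_on continuous_on_subset by blast
  qed
  have B0: "B \<ge> 0" using B[of 0] norm_ge_zero[of "G 0"] by linarith
  have cont: "continuous_on {0..T} (P n)" for n
  proof (induction n)
    case 0 then show ?case by (simp add: P_def)
  next
    case (Suc n)
    have "continuous_on {0..T} (\<lambda>s. G (P n s))"
      using Suc Gc continuous_on_compose2 by blast
    then have "(\<lambda>s. G (P n s)) integrable_on {0..T}"
      by (rule integrable_continuous_real)
    then have "continuous_on {0..T} (\<lambda>t. integral {0..t} (\<lambda>s. G (P n s)))"
      by (rule indefinite_integral_continuous_1)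
    then show ?case by (simp add: P_def continuous_on_add)
  qed
  have intg: "(\<lambda>s. G (P n s)) integrable_on {0..t}" if "t \<le> T" for n t
  proof -
    have "continuous_on {0..t} (\<lambda>s. G (P n s))"
      using cont[of n] that Gc continuous_on_compose2 continuous_on_subset
      by (metis atLeastatMost_subset_iff order_refl)
    then show ?thesis by (rule integrable_continuous_real)
  qed
  have bnd: "norm (P (Suc n) t - P n t) \<le> B * L ^ n * t ^ Suc n / fact (Suc n)"
    if "t \<in> {0..T}" for n t
    using that
  proof (induction n arbitrary: t)
    case 0
    then have "norm (integral {0..t} (\<lambda>s. G z0)) \<le> integral {0..t} (\<lambda>s. B)"
      by (intro integral_norm_bound_integral) (auto simp: B)
    then show ?case using 0 by (simp add: P_def mult.commute)
  next
    case (Suc n)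
    have tT: "t \<le> T" using Suc by auto
    have eq: "P (Suc (Suc n)) t - P (Suc n) t
        = integral {0..t} (\<lambda>s. G (P (Suc n) s) - G (P n s))"
    proof -
      have e1: "P (Suc (Suc n)) t = z0 + integral {0..t} (\<lambda>s. G (P (Suc n) s))"
        unfolding P_def by (simp only: picard_it.simps)
      have e2: "P (Suc n) t = z0 + integral {0..t} (\<lambda>s. G (P n s))"
        unfolding P_def by (simp only: picard_it.simps)
      show ?thesis using e1 e2 integral_diff[OF intg[OF tT] intg[OF tT], of "Suc n" n] by simp
    qed
    have hi: "((\<lambda>s. L * (B * L ^ n * s ^ Suc n / fact (Suc n))) has_integral
          (L * (B * L ^ n * t ^ Suc (Suc n) / fact (Suc (Suc n))))) {0..t}"
    proof -
      define K where "K = L * B * L ^ n / fact (Suc (Suc n))"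
      have fe: "L * (B * L ^ n * s ^ Suc n / fact (Suc n)) = K * (real (Suc (Suc n)) * s ^ Suc n)" for s
        by (simp add: K_def field_simps del: of_nat_Suc)
      have "((\<lambda>s. K * (real (Suc (Suc n)) * s ^ Suc n)) has_integral
          ((\<lambda>s. K * s ^ Suc (Suc n)) t - (\<lambda>s. K * s ^ Suc (Suc n)) 0)) {0..t}"
      proof (rule fundamental_theorem_of_calculus)
        show "0 \<le> t" using Suc by simp
        fix s :: real
        have "((\<lambda>s. K * s ^ Suc (Suc n)) has_real_derivative K * (real (Suc (Suc n)) * s ^ Suc n)) (at s)"
          by (rule derivative_eq_intros refl)+ simp
        then show "((\<lambda>s. K * s ^ Suc (Suc n)) has_vector_derivative K * (real (Suc (Suc n)) * s ^ Suc n)) (at s within {0..t})"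
          by (simp add: has_real_derivative_iff_has_vector_derivative[symmetric] has_field_derivative_at_within)
      qed
      moreover have "(\<lambda>s. K * s ^ Suc (Suc n)) t - (\<lambda>s. K * s ^ Suc (Suc n)) 0
          = L * (B * L ^ n * t ^ Suc (Suc n) / fact (Suc (Suc n)))"
        by (simp add: K_def)
      ultimately show ?thesis by (simp only: fe)
    qed
    have "norm (integral {0..t} (\<lambda>s. G (P (Suc n) s) - G (P n s)))
        \<le> integral {0..t} (\<lambda>s. L * (B * L ^ n * s ^ Suc n / fact (Suc n)))"
    proof (rule integral_norm_bound_integral)
      show "(\<lambda>s. G (P (Suc n) s) - G (P n s)) integrable_on {0..t}"
        using intg[OF tT] by (intro integrable_diff)
      show "(\<lambda>s. L * (B * L ^ n * s ^ Suc n / fact (Suc n))) integrable_on {0..t}"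
        using hi by blast
      fix s assume s: "s \<in> {0..t}"
      have "norm (G (P (Suc n) s) - G (P n s)) \<le> L * norm (P (Suc n) s - P n s)" by (rule L)
      also have "\<dots> \<le> L * (B * L ^ n * s ^ Suc n / fact (Suc n))"
        using Suc.IH[of s] s tT L0 by (intro mult_left_mono) auto
      finally show "norm (G (P (Suc n) s) - G (P n s)) \<le> L * (B * L ^ n * s ^ Suc n / fact (Suc n))" .
    qed
    also have "\<dots> = L * (B * L ^ n * t ^ Suc (Suc n) / fact (Suc (Suc n)))"
      using hi by (rule integral_unique)
    finally show ?case using eq by (simp add: mult_ac)
  qed
  define D where "D k t = P (Suc k) t - P k t" for k t
  have Dle: "norm (D k t) \<le> B * T * ((L * T) ^ k /\<^sub>R fact k)" if "t \<in> {0..T}" for k t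
  proof -
    have "norm (D k t) \<le> B * L ^ k * t ^ Suc k / fact (Suc k)" using bnd[OF that] by (simp add: D_def)
    also have "\<dots> \<le> B * L ^ k * T ^ Suc k / fact k"
    proof (rule frac_le)
      show "0 \<le> B * L ^ k * T ^ Suc k" using B0 L0 T0 by simp
      show "B * L ^ k * t ^ Suc k \<le> B * L ^ k * T ^ Suc k"
        using that B0 L0 by (intro mult_left_mono power_mono) auto
      show "0 < (fact k :: real)" by simp
      show "(fact k :: real) \<le> fact (Suc k)" by (rule fact_mono) simp
    qed
    also have "\<dots> = B * T * ((L * T) ^ k /\<^sub>R fact k)"
      by (simp add: power_mult_distrib field_simps)
    finally show ?thesis .
  qed
  have "summable (\<lambda>k. B * T * ((L * T) ^ k /\<^sub>R fact k))"
    by (intro summable_mult summable_exp_generic)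
  then have "uniformly_convergent_on {0..T} (\<lambda>n t. \<Sum>i<n. D i t)"
    by (intro Weierstrass_m_test'[OF Dle])
  then obtain S where S: "uniform_limit {0..T} (\<lambda>n t. \<Sum>i<n. D i t) S sequentially"
    by (auto simp: uniformly_convergent_on_def)
  define x where "x t = z0 + S t" for t
  have Psum: "P n t = z0 + (\<Sum>i<n. D i t)" for n t
    by (induction n) (auto simp: D_def P_def)
  have ulP: "uniform_limit {0..T} P x sequentially"
  proof -
    have "uniform_limit {0..T} (\<lambda>n t. z0 + (\<Sum>i<n. D i t)) (\<lambda>t. z0 + S t) sequentially"
      by (intro uniform_limit_intros S)
    then show ?thesis by (simp add: Psum[abs_def] x_def[abs_def])
  qed
  have xcont: "continuous_on {0..T} x"
    by (rule uniform_limit_theorem[OF _ ulP]) (auto intro: cont always_eventually)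
  have Gxcont: "continuous_on {0..T} (\<lambda>s. G (x s))"
    using xcont Gc continuous_on_compose2 by blast
  have xeq: "x t = z0 + integral {0..t} (\<lambda>s. G (x s))" if t: "t \<in> {0..T}" for t
  proof -
    have sub: "{0..t} \<subseteq> {0..T}" using t by auto
    have ulG: "uniform_limit {0..t} (\<lambda>n s. G (P n s)) (\<lambda>s. G (x s)) sequentially"
    proof (rule uniform_limitI)
      fix e :: real assume e: "e > 0"
      have "\<forall>\<^sub>F n in sequentially. \<forall>s\<in>{0..T}. dist (P n s) (x s) < e / (L + 1)"
        using ulP e L0 by (auto simp: uniform_limit_iff)
      then show "\<forall>\<^sub>F n in sequentially. \<forall>s\<in>{0..t}. dist (G (P n s)) (G (x s)) < e"
      proof eventually_elim
        case (elim n)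
        show ?case
        proof
          fix s assume s: "s \<in> {0..t}"
          then have d: "norm (P n s - x s) < e / (L + 1)" using elim sub by (auto simp: dist_norm)
          have "norm (G (P n s) - G (x s)) \<le> L * norm (P n s - x s)" by (rule L)
          also have "\<dots> \<le> L * (e / (L + 1))" using d L0 by (intro mult_left_mono) auto
          also have "\<dots> < e" using e L0 by (simp add: field_simps)
          finally show "dist (G (P n s)) (G (x s)) < e" by (simp add: dist_norm)
        qed
      qed
    qed
    have cn: "continuous_on {0..t} (\<lambda>s. G (P n s))" for n
      using cont[of n] Gc continuous_on_compose2 continuous_on_subset[OF _ sub] by blast
    obtain I J where I: "\<And>n. ((\<lambda>s. G (P n s)) has_integral I n) {0..t}"
      and J: "((\<lambda>s. G (x s)) has_integral J) {0..t}" and IJ: "I \<longlonglongrightarrow> J"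
      using uniform_limit_integral[OF ulG cn] by auto
    have "(\<lambda>n. P (Suc n) t) \<longlonglongrightarrow> z0 + J"
    proof -
      have "P (Suc n) t = z0 + I n" for n
        using I[of n] by (simp add: P_def integral_unique)
      then show ?thesis using IJ by (simp add: tendsto_add)
    qed
    moreover have "(\<lambda>n. P n t) \<longlonglongrightarrow> x t"
      using ulP t by (rule tendsto_uniform_limitI)
    then have "(\<lambda>n. P (Suc n) t) \<longlonglongrightarrow> x t" by (rule LIMSEQ_Suc)
    ultimately have "x t = z0 + J" using LIMSEQ_unique by blast
    then show ?thesis using J by (simp add: integral_unique)
  qed
  show ?thesis
  proof (intro exI conjI ballI)
    show "x 0 = z0" using xeq[of 0] T0 by simp
    fix t assume t: "t \<in> {0..T}"
    have "((\<lambda>u. z0 + integral {0..u} (\<lambda>s. G (x s))) has_vector_derivative G (x t)) (at t within {0..T})"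
      using integral_has_vector_derivative[OF Gxcont t]
      by (intro derivative_eq_intros) auto
    then show "(x has_vector_derivative G (x t)) (at t within {0..T})"
      by (rule has_vector_derivative_transform[rotated -1]) (use t xeq in auto)
  qed
qed

definition Mf :: "real \<Rightarrow> real" where "Mf y1 = (sin y1)\<^sup>2 + 1/3"

lemma Mf_pos: "Mf y1 \<ge> 1/3" by (simp add: Mf_def)

definition Fp2 :: "real \<Rightarrow> real \<Rightarrow> real \<Rightarrow> real" where
  "Fp2 y1 y2 p2 = - (sin y1 / 3 + y2^2 * sin y1 * cos y1) / Mf y1 - p2 * (cos y1)\<^sup>2 / (9 * (Mf y1)\<^sup>2)"
definition Fy2 :: "real \<Rightarrow> real \<Rightarrow> real \<Rightarrow> real \<Rightarrow> real" where
  "Fy2 y1 y2 p1 p2 = p1 - p2 * (2 * y2 * sin y1 * cos y1) / Mf y1"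
definition Fy1 :: "real \<Rightarrow> real \<Rightarrow> real \<Rightarrow> real" where
  "Fy1 y1 y2 p2 = - p2 * ((cos y1 / 3 + y2^2 * ((cos y1)\<^sup>2 - (sin y1)\<^sup>2)) * Mf y1
        - 2 * sin y1 * cos y1 * (sin y1 / 3 + y2^2 * sin y1 * cos y1)) / (Mf y1)\<^sup>2
     + p2^2 * (2 * sin y1 * cos y1 * (Mf y1 + 2 * (cos y1)\<^sup>2)) / (18 * (Mf y1)^3)"

lemma H_alt: "H y1 y2 p1 p2 = p1 * y2 - p2 * (sin y1 / 3 + y2^2 * sin y1 * cos y1) / Mf y1
   - p2^2 * (cos y1)\<^sup>2 / (18 * (Mf y1)\<^sup>2)"
  by (simp add: H_def Mf_def sin_double)

lemma d_p1: "dH_dp1 y1 y2 p1 p2 = y2"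
  unfolding dH_dp1_def H_alt
  by (rule DERIV_imp_deriv) (rule derivative_eq_intros refl | simp)+

lemma d_p2: "dH_dp2 y1 y2 p1 p2 = Fp2 y1 y2 p2"
proof -
  have M: "Mf y1 \<noteq> 0" using Mf_pos[of y1] by linarith
  show ?thesis unfolding dH_dp2_def H_alt
    apply (rule DERIV_imp_deriv)
    apply (auto intro!: derivative_eq_intros simp: M)[1]
    using M apply (simp add: Fp2_def field_simps eval_nat_numeral)
    done
qed

lemma d_y2: "dH_dy2 y1 y2 p1 p2 = Fy2 y1 y2 p1 p2"
proof -
  have M: "Mf y1 \<noteq> 0" using Mf_pos[of y1] by linarith
  show ?thesis unfolding dH_dy2_def H_alt
    apply (rule DERIV_imp_deriv)
    apply (auto intro!: derivative_eq_intros simp: M)[1]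
    using M apply (simp add: Fy2_def field_simps power2_eq_square)
    done
qed

lemma Mf_deriv: "(Mf has_real_derivative 2 * sin y * cos y) (at y)"
  unfolding Mf_def[abs_def]
  by (rule derivative_eq_intros refl | simp)+

lemma d_y1: "dH_dy1 y1 y2 p1 p2 = Fy1 y1 y2 p2"
proof -
  have M: "Mf y1 \<noteq> 0" using Mf_pos[of y1] by linarith
  show ?thesis unfolding dH_dy1_def H_alt
    apply (rule DERIV_imp_deriv)
    apply (auto intro!: derivative_eq_intros Mf_deriv simp: M)[1]
    using M apply (simp add: Fy1_def field_simps eval_nat_numeral)
    done
qed

lemma ham_field_eq: "ham_field (y1, y2, p1, p2) = (y2, Fp2 y1 y2 p2, - Fy1 y1 y2 p2, - Fy2 y1 y2 p1 p2)"
  by (simp add: ham_field_def d_p1 d_p2 d_y1 d_y2)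

type_synonym R4 = "real \<times> real \<times> real \<times> real"

definition LB :: "('a::real_normed_vector \<Rightarrow> real) \<Rightarrow> bool" where
  "LB f \<longleftrightarrow> (\<exists>L B. L \<ge> 0 \<and> (\<forall>z w. \<bar>f z - f w\<bar> \<le> L * norm (z - w)) \<and> (\<forall>z. \<bar>f z\<bar> \<le> B))"

lemma LB_const: "LB (\<lambda>z. k)"
  unfolding LB_def by (rule exI[of _ 0], rule exI[of _ "\<bar>k\<bar>"]) simp

lemma LB_add: "LB f \<Longrightarrow> LB g \<Longrightarrow> LB (\<lambda>z. f z + g z)"
  unfolding LB_def
proof (elim exE conjE)
  fix L1 B1 L2 B2
  assume a: "L1 \<ge> 0" "\<forall>z w. \<bar>f z - f w\<bar> \<le> L1 * norm (z - w)" "\<forall>z. \<bar>f z\<bar> \<le> B1"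
    and b: "L2 \<ge> 0" "\<forall>z w. \<bar>g z - g w\<bar> \<le> L2 * norm (z - w)" "\<forall>z. \<bar>g z\<bar> \<le> B2"
  show "\<exists>L B. 0 \<le> L \<and> (\<forall>z w. \<bar>f z + g z - (f w + g w)\<bar> \<le> L * norm (z - w)) \<and> (\<forall>z. \<bar>f z + g z\<bar> \<le> B)"
  proof (intro exI conjI allI)
    show "0 \<le> L1 + L2" using a b by simp
    fix z w
    have "\<bar>f z + g z - (f w + g w)\<bar> \<le> \<bar>f z - f w\<bar> + \<bar>g z - g w\<bar>" by linarith
    also have "\<dots> \<le> L1 * norm (z - w) + L2 * norm (z - w)" using a b by (meson add_mono)
    finally show "\<bar>f z + g z - (f w + g w)\<bar> \<le> (L1 + L2) * norm (z - w)" by (simp add: algebra_simps)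
  next
    fix z show "\<bar>f z + g z\<bar> \<le> B1 + B2" using a(3) b(3) by (meson abs_triangle_ineq add_mono order_trans)
  qed
qed

lemma LB_minus: "LB f \<Longrightarrow> LB (\<lambda>z. - f z)"
  unfolding LB_def by (metis abs_minus_cancel minus_diff_eq minus_diff_minus abs_minus_commute)

lemma LB_diff: "LB f \<Longrightarrow> LB g \<Longrightarrow> LB (\<lambda>z. f z - g z)"
  using LB_add[OF _ LB_minus[of g]] by simp

lemma LB_mult: "LB f \<Longrightarrow> LB g \<Longrightarrow> LB (\<lambda>z. f z * g z)"
  unfolding LB_def
proof (elim exE conjE)
  fix L1 B1 L2 B2
  assume a: "L1 \<ge> 0" "\<forall>z w. \<bar>f z - f w\<bar> \<le> L1 * norm (z - w)" "\<forall>z. \<bar>f z\<bar> \<le> B1"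
    and b: "L2 \<ge> 0" "\<forall>z w. \<bar>g z - g w\<bar> \<le> L2 * norm (z - w)" "\<forall>z. \<bar>g z\<bar> \<le> B2"
  have B1: "B1 \<ge> 0" using a(3) by (meson abs_ge_zero order_trans)
  have B2: "B2 \<ge> 0" using b(3) by (meson abs_ge_zero order_trans)
  show "\<exists>L B. 0 \<le> L \<and> (\<forall>z w. \<bar>f z * g z - f w * g w\<bar> \<le> L * norm (z - w)) \<and> (\<forall>z. \<bar>f z * g z\<bar> \<le> B)"
  proof (intro exI conjI allI)
    show "0 \<le> B1 * L2 + L1 * B2" using a b B1 B2 by simp
    fix z w
    have "f z * g z - f w * g w = f z * (g z - g w) + (f z - f w) * g w" by (simp add: algebra_simps)
    then have "\<bar>f z * g z - f w * g w\<bar> \<le> \<bar>f z\<bar> * \<bar>g z - g w\<bar> + \<bar>f z - f w\<bar> * \<bar>g w\<bar>"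
      by (simp add: abs_mult[symmetric] abs_triangle_ineq)
    also have "\<dots> \<le> B1 * (L2 * norm (z - w)) + (L1 * norm (z - w)) * B2"
      using a b B1 B2 by (intro add_mono mult_mono) auto
    finally show "\<bar>f z * g z - f w * g w\<bar> \<le> (B1 * L2 + L1 * B2) * norm (z - w)" by (simp add: algebra_simps)
  next
    fix z show "\<bar>f z * g z\<bar> \<le> B1 * B2" using a(3) b(3) B1 B2 by (simp add: abs_mult mult_mono)
  qed
qed

lemma LB_pow: "LB f \<Longrightarrow> LB (\<lambda>z. f z ^ n)"
  by (induction n) (auto intro: LB_const LB_mult)

lemma LB_comp1: assumes "LB f" and h: "\<And>a b. \<bar>h a - h b\<bar> \<le> \<bar>a - b\<bar>" and hb: "\<And>a. \<bar>h a\<bar> \<le> 1"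
  shows "LB (\<lambda>z. h (f z))"
  using assms(1) unfolding LB_def
proof (elim exE conjE)
  fix L1 B1
  assume a: "L1 \<ge> 0" "\<forall>z w. \<bar>f z - f w\<bar> \<le> L1 * norm (z - w)" "\<forall>z. \<bar>f z\<bar> \<le> B1"
  show "\<exists>L B. 0 \<le> L \<and> (\<forall>z w. \<bar>h (f z) - h (f w)\<bar> \<le> L * norm (z - w)) \<and> (\<forall>z. \<bar>h (f z)\<bar> \<le> B)"
    using a h hb order_trans by blast
qed

lemma sin_lip: "\<bar>sin a - sin b\<bar> \<le> \<bar>a - (b::real)\<bar>"
proof -
  have "\<bar>sin a - sin b\<bar> = 2 * \<bar>sin ((a - b) / 2)\<bar> * \<bar>cos ((a + b) / 2)\<bar>"
    by (simp add: sin_diff_sin abs_mult)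
  also have "\<dots> \<le> 2 * \<bar>(a - b) / 2\<bar> * 1"
    by (rule mult_mono[OF mult_left_mono[OF abs_sin_x_le_abs_x] abs_cos_le_one]) auto
  finally show ?thesis by simp
qed

lemma cos_lip: "\<bar>cos a - cos b\<bar> \<le> \<bar>a - (b::real)\<bar>"
proof -
  have "\<bar>cos a - cos b\<bar> = 2 * \<bar>sin ((a + b) / 2)\<bar> * \<bar>sin ((b - a) / 2)\<bar>"
    by (simp add: cos_diff_cos abs_mult)
  also have "\<dots> \<le> 2 * 1 * \<bar>(b - a) / 2\<bar>"
    by (rule mult_mono[OF mult_left_mono[OF abs_sin_le_one] abs_sin_x_le_abs_x]) auto
  finally show ?thesis by simp
qed

lemma LB_sin: "LB f \<Longrightarrow> LB (\<lambda>z. sin (f z))"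
  by (rule LB_comp1) (auto simp: sin_lip)

lemma LB_cos: "LB f \<Longrightarrow> LB (\<lambda>z. cos (f z))"
  by (rule LB_comp1) (auto simp: cos_lip)

lemma LB_inv: assumes "LB f" and m: "m > 0" and fm: "\<And>z. f z \<ge> m"
  shows "LB (\<lambda>z. 1 / f z)"
  using assms(1) unfolding LB_def
proof (elim exE conjE)
  fix L1 B1
  assume a: "L1 \<ge> 0" "\<forall>z w. \<bar>f z - f w\<bar> \<le> L1 * norm (z - w)" "\<forall>z. \<bar>f z\<bar> \<le> B1"
  show "\<exists>L B. 0 \<le> L \<and> (\<forall>z w. \<bar>1 / f z - 1 / f w\<bar> \<le> L * norm (z - w)) \<and> (\<forall>z. \<bar>1 / f z\<bar> \<le> B)"
  proof (intro exI conjI allI)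
    show "0 \<le> L1 / m^2" using a m by simp
    fix z w
    have pz: "f z > 0" "f w > 0" using fm m by (meson less_le_trans)+
    have "\<bar>1 / f z - 1 / f w\<bar> = \<bar>f w - f z\<bar> / (f z * f w)"
      using pz by (simp add: field_simps abs_div abs_mult)
    also have "\<dots> \<le> \<bar>f w - f z\<bar> / (m * m)"
      using pz m fm by (intro divide_left_mono mult_mono) auto
    also have "\<dots> \<le> (L1 * norm (z - w)) / (m * m)"
      using a(2) m by (intro divide_right_mono) (metis abs_minus_commute, simp)
    finally show "\<bar>1 / f z - 1 / f w\<bar> \<le> L1 / m^2 * norm (z - w)" by (simp add: power2_eq_square)
  next
    fix z
    have pz: "f z > 0" using fm m by (meson less_le_trans)
    show "\<bar>1 / f z\<bar> \<le> 1 / m" using pz fm m by (simp add: frac_le)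
  qed
qed

definition clamp :: "real \<Rightarrow> real" where "clamp a = max (-1/10) (min (1/10) a)"

lemma clamp_lip: "\<bar>clamp a - clamp b\<bar> \<le> \<bar>a - b\<bar>"
  unfolding clamp_def by (auto simp: max_def min_def abs_if)

lemma clamp_bnd: "\<bar>clamp a\<bar> \<le> 1/10"
  unfolding clamp_def by (auto simp: max_def min_def abs_if)

lemma clamp_id: "\<bar>a\<bar> \<le> 1/10 \<Longrightarrow> clamp a = a"
  unfolding clamp_def by (simp add: abs_le_iff min_absorb2 max_absorb2)

lemma LB_clamp: assumes "\<And>z w. \<bar>f z - f w\<bar> \<le> norm (z - w)" shows "LB (\<lambda>z. clamp (f z))"
  unfolding LB_def
proof (intro exI conjI allI)
  show "(1::real) \<ge> 0" by simp
  fix z w show "\<bar>clamp (f z) - clamp (f w)\<bar> \<le> 1 * norm (z - w)"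
    using clamp_lip[of "f z" "f w"] assms[of z w] by simp
next
  fix z show "\<bar>clamp (f z)\<bar> \<le> 1/10" by (rule clamp_bnd)
qed

definition Y1 :: "R4 \<Rightarrow> real" where "Y1 z = clamp (fst z)"
definition Y2 :: "R4 \<Rightarrow> real" where "Y2 z = clamp (fst (snd z))"
definition Y3 :: "R4 \<Rightarrow> real" where "Y3 z = clamp (fst (snd (snd z)))"
definition Y4 :: "R4 \<Rightarrow> real" where "Y4 z = clamp (snd (snd (snd z)))"

lemma LB_Y: "LB Y1" "LB Y2" "LB Y3" "LB Y4"
proof -
  have nf: "norm (fst x) \<le> norm x" for x :: "real \<times> 'b::real_normed_vector"
    by (metis norm_fst_le prod.collapse)
  have ns: "norm (snd x) \<le> norm x" for x :: "real \<times> 'b::real_normed_vector"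
    by (metis norm_snd_le prod.collapse)
  have n1: "\<bar>fst z - fst w\<bar> \<le> norm (z - w)" for z w :: R4
    using nf[of "z - w"] by simp
  have n2: "\<bar>fst (snd z) - fst (snd w)\<bar> \<le> norm (z - w)" for z w :: R4
    using nf[of "snd (z - w)"] ns[of "z - w"] by simp
  have n3: "\<bar>fst (snd (snd z)) - fst (snd (snd w))\<bar> \<le> norm (z - w)" for z w :: R4
    using nf[of "snd (snd (z - w))"] ns[of "snd (z - w)"] ns[of "z - w"] by simp
  have n4: "\<bar>snd (snd (snd z)) - snd (snd (snd w))\<bar> \<le> norm (z - w)" for z w :: R4
    using ns[of "snd (snd (z - w))"] ns[of "snd (z - w)"] ns[of "z - w"] by simp
  show "LB Y1" unfolding Y1_def[abs_def] by (rule LB_clamp[OF n1])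
  show "LB Y2" unfolding Y2_def[abs_def] by (rule LB_clamp[OF n2])
  show "LB Y3" unfolding Y3_def[abs_def] by (rule LB_clamp[OF n3])
  show "LB Y4" unfolding Y4_def[abs_def] by (rule LB_clamp[OF n4])
qed

lemma LB_divc: "LB f \<Longrightarrow> LB (\<lambda>z. f z / k)"
  using LB_mult[OF _ LB_const[of "1/k"]] by (simp add: field_simps)

definition iM :: "real \<Rightarrow> real" where "iM y = 1 / Mf y"

lemma LB_iM: "LB (\<lambda>z. iM (Y1 z))"
  unfolding iM_def
proof (rule LB_inv[of _ "1/3"])
  show "LB (\<lambda>z. Mf (Y1 z))" unfolding Mf_def
    by (intro LB_add LB_pow LB_sin LB_Y LB_const)
qed (auto simp: Mf_def)

lemma Fp2_alt: "Fp2 y1 y2 p2 = -(sin y1 / 3 + y2^2 * sin y1 * cos y1) * iM y1 - p2 * (cos y1)\<^sup>2 * (iM y1)^2 / 9"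
  using Mf_pos[of y1] by (simp add: Fp2_def iM_def field_simps power2_eq_square)
lemma Fy2_alt: "Fy2 y1 y2 p1 p2 = p1 - p2 * (2 * y2 * sin y1 * cos y1) * iM y1"
  using Mf_pos[of y1] by (simp add: Fy2_def iM_def field_simps)
lemma Fy1_alt: "Fy1 y1 y2 p2 = - p2 * ((cos y1 / 3 + y2^2 * ((cos y1)\<^sup>2 - (sin y1)\<^sup>2)) * Mf y1
        - 2 * sin y1 * cos y1 * (sin y1 / 3 + y2^2 * sin y1 * cos y1)) * (iM y1)^2
     + p2^2 * (2 * sin y1 * cos y1 * (Mf y1 + 2 * (cos y1)\<^sup>2)) * (iM y1)^3 / 18"
  using Mf_pos[of y1] by (simp add: Fy1_def iM_def field_simps power2_eq_square)

definition cl :: "R4 \<Rightarrow> R4" where "cl z = (Y1 z, Y2 z, Y3 z, Y4 z)"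

lemma G_eq: "ham_field (cl z) = (Y2 z, Fp2 (Y1 z) (Y2 z) (Y4 z), - Fy1 (Y1 z) (Y2 z) (Y4 z), - Fy2 (Y1 z) (Y2 z) (Y3 z) (Y4 z))"
  by (simp add: cl_def ham_field_eq)

lemma LB_comps:
  "LB (\<lambda>z. Fp2 (Y1 z) (Y2 z) (Y4 z))" "LB (\<lambda>z. - Fy1 (Y1 z) (Y2 z) (Y4 z))" "LB (\<lambda>z. - Fy2 (Y1 z) (Y2 z) (Y3 z) (Y4 z))"
  unfolding Fp2_alt Fy1_alt Fy2_alt Mf_def
  by (intro LB_add LB_diff LB_minus LB_mult LB_pow LB_sin LB_cos LB_Y LB_const LB_divc LB_iM)+

lemma LB_vec:
  fixes a1 a2 a3 a4 :: "R4 \<Rightarrow> real"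
  assumes "LB a1" "LB a2" "LB a3" "LB a4"
  shows "\<exists>L B. L \<ge> 0 \<and> (\<forall>z w. norm ((a1 z, a2 z, a3 z, a4 z) - (a1 w, a2 w, a3 w, a4 w)) \<le> L * norm (z - w))
     \<and> (\<forall>z. norm (a1 z, a2 z, a3 z, a4 z) \<le> B)"
proof -
  obtain L1 B1 where 1: "L1 \<ge> 0" "\<And>z w. \<bar>a1 z - a1 w\<bar> \<le> L1 * norm (z - w)" "\<And>z. \<bar>a1 z\<bar> \<le> B1"
    using assms(1) unfolding LB_def by blast
  obtain L2 B2 where 2: "L2 \<ge> 0" "\<And>z w. \<bar>a2 z - a2 w\<bar> \<le> L2 * norm (z - w)" "\<And>z. \<bar>a2 z\<bar> \<le> B2"
    using assms(2) unfolding LB_def by blast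
  obtain L3 B3 where 3: "L3 \<ge> 0" "\<And>z w. \<bar>a3 z - a3 w\<bar> \<le> L3 * norm (z - w)" "\<And>z. \<bar>a3 z\<bar> \<le> B3"
    using assms(3) unfolding LB_def by blast
  obtain L4 B4 where 4: "L4 \<ge> 0" "\<And>z w. \<bar>a4 z - a4 w\<bar> \<le> L4 * norm (z - w)" "\<And>z. \<bar>a4 z\<bar> \<le> B4"
    using assms(4) unfolding LB_def by blast
  have n4: "norm (x1, x2, x3, x4) \<le> \<bar>x1\<bar> + \<bar>x2\<bar> + \<bar>x3\<bar> + \<bar>x4\<bar>" for x1 x2 x3 x4 :: real
  proof -
    have "norm (x1, x2, x3, x4) \<le> norm x1 + norm (x2, x3, x4)" by (rule norm_Pair_le)
    also have "norm (x2, x3, x4) \<le> norm x2 + norm (x3, x4)" by (rule norm_Pair_le)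
    also have "norm (x3, x4) \<le> norm x3 + norm x4" by (rule norm_Pair_le)
    finally show ?thesis by simp
  qed
  show ?thesis
  proof (intro exI conjI allI)
    show "L1 + L2 + L3 + L4 \<ge> 0" using 1 2 3 4 by simp
    fix z w
    have "norm ((a1 z, a2 z, a3 z, a4 z) - (a1 w, a2 w, a3 w, a4 w))
        \<le> \<bar>a1 z - a1 w\<bar> + \<bar>a2 z - a2 w\<bar> + \<bar>a3 z - a3 w\<bar> + \<bar>a4 z - a4 w\<bar>"
      using n4 by simp
    also have "\<dots> \<le> L1 * norm (z - w) + L2 * norm (z - w) + L3 * norm (z - w) + L4 * norm (z - w)"
      using 1(2) 2(2) 3(2) 4(2) by (intro add_mono) auto
    finally show "norm ((a1 z, a2 z, a3 z, a4 z) - (a1 w, a2 w, a3 w, a4 w)) \<le> (L1 + L2 + L3 + L4) * norm (z - w)"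
      by (simp add: algebra_simps)
  next
    fix z
    have "norm (a1 z, a2 z, a3 z, a4 z) \<le> \<bar>a1 z\<bar> + \<bar>a2 z\<bar> + \<bar>a3 z\<bar> + \<bar>a4 z\<bar>" by (rule n4)
    also have "\<dots> \<le> B1 + B2 + B3 + B4" using 1(3) 2(3) 3(3) 4(3) by (intro add_mono) auto
    finally show "norm (a1 z, a2 z, a3 z, a4 z) \<le> B1 + B2 + B3 + B4" .
  qed
qed

lemma G_lip: "\<exists>L B. L \<ge> 0 \<and> (\<forall>z w. norm (ham_field (cl z) - ham_field (cl w)) \<le> L * norm (z - w))
     \<and> (\<forall>z. norm (ham_field (cl z)) \<le> B)"
  unfolding G_eq using LB_vec[OF LB_Y(2) LB_comps] .

lemma vd_identity_poly:
  fixes s c M u v w y2 p1 p2 :: real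
  assumes sc: "s^2 + c^2 = 1" and Mdef: "3 * M = 3 * s^2 + 1" and u: "u * M = 1" and v: "v * (1 + c) = 1" and w: "w * c = 1"
  shows "-((-(- p2 * ((c/3 + y2^2 * (c^2-s^2)) * M - 2 * s * c * (s/3 + y2^2 * s * c)) * u^2 + p2^2 * (2 * s * c * (M+2 * c^2)) * u^3/18)) * (2 * s * v)
          + p1 * (2 * v) * y2
          + (-(p1 - p2 * (2 * y2 * s * c) * u)) * (y2 * (1 - 2 * c * (1-c) * u))
          + p2 * (y2 * (-(2 * s * (2 * c-1) * M - 4 * s * c^2 * (1-c)) * u^2) * y2
                  + (1 - 2 * c * (1-c) * u) * (-(s/3 + y2^2 * s * c) * u - p2 * c^2 * u^2/9)))
       = ((1 - 2 * c * (1-c) * u) - 2 * v) * (p1 * y2 - p2 * (s/3 + y2^2 * s * c) * u - p2^2 * c^2 * u^2/18)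
         + ((1 - 2 * c * (1-c) * u) + ((1 - 2 * c * (1-c) * u) - 2 * v)/2 + 2 * s^2 * (M+2 * c^2) * u * w * v)
           * (p2 * (c * u/3))^2"
proof -
  have A0: "1 - u * M = 0" using u by simp
  have B0: "1 - v * (1 + c) = 0" using v by simp
  have C0: "1 - w * c = 0" using w by simp
  have P2: "-c * (M - 2 * s^2) + (M - 2 * c * (1-c)) * (1+c) - M = 0" using sc by algebra
  have P3: "-(c^2-s^2) * M + 2 * s^2 * c^2 + ((2 * c-1) * M - 2 * c^2 * (1-c)) * (1+c) - c * M = 0"
    using sc by algebra
  define E2 where "E2 = -((c * M/3 - 2 * s^2 * c/3) * u^2 * 2 * s * v - (1 - 2 * c * (1-c) * u) * s * u/3) + ((1 - 2 * c * (1-c) * u) - 2 * v) * s * u/3"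
  define E3 where "E3 = -(((c^2-s^2) * M - 2 * s^2 * c^2) * u^2 * 2 * s * v + 2 * s * c * u * (1 - 2 * c * (1-c) * u) + (-(2 * s * (2 * c-1) * M - 4 * s * c^2 * (1-c)) * u^2) - (1 - 2 * c * (1-c) * u) * s * c * u) + ((1 - 2 * c * (1-c) * u) - 2 * v) * s * c * u"
  define E4 where "E4 = -(-(2 * s * c * (M+2 * c^2)) * u^3 * 2 * s * v/18 - (1 - 2 * c * (1-c) * u) * c^2 * u^2/9) + ((1 - 2 * c * (1-c) * u) - 2 * v) * c^2 * u^2/18 - ((1 - 2 * c * (1-c) * u) + ((1 - 2 * c * (1-c) * u) - 2 * v)/2 + 2 * s^2 * (M+2 * c^2) * u * w * v) * c^2 * u^2/9"
  have E2f: "E2 = 2/3 * s * u^2 * v * (-c * (M - 2 * s^2) + (M - 2 * c * (1-c)) * (1+c) - M)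
      + 2/3 * s * (u * (1 - v * (1 + c)) + u * v * c * (1 - u * M) - 2 * c * (1-c) * u^2 * (1 - v * (1 + c)))"
    unfolding E2_def by (simp add: field_simps power2_eq_square)
  have E3f: "E3 = 2 * s * u^2 * v * (-(c^2-s^2) * M + 2 * s^2 * c^2 + ((2 * c-1) * M - 2 * c^2 * (1-c)) * (1+c) - c * M)
      - 2 * s * v * c * u * (1 - u * M) + (2 * s * (2 * c-1) * M - 4 * s * c^2 * (1-c)) * u^2 * (1 - v * (1 + c))"
    unfolding E3_def by (simp add: field_simps power2_eq_square)
  have E4f: "E4 = (2 * s^2 * (M+2 * c^2) * u^3 * v/9) * c * (1 - w * c)"
    unfolding E4_def by (simp add: field_simps power2_eq_square power3_eq_cube)
  have E2z: "E2 = 0" unfolding E2f P2 A0 B0 by simp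
  have E3z: "E3 = 0" unfolding E3f P3 A0 B0 by simp
  have E4z: "E4 = 0" unfolding E4f C0 by simp
  have comb: "(-((-(- p2 * ((c/3 + y2^2 * (c^2-s^2)) * M - 2 * s * c * (s/3 + y2^2 * s * c)) * u^2 + p2^2 * (2 * s * c * (M+2 * c^2)) * u^3/18)) * (2 * s * v)
          + p1 * (2 * v) * y2
          + (-(p1 - p2 * (2 * y2 * s * c) * u)) * (y2 * (1 - 2 * c * (1-c) * u))
          + p2 * (y2 * (-(2 * s * (2 * c-1) * M - 4 * s * c^2 * (1-c)) * u^2) * y2
                  + (1 - 2 * c * (1-c) * u) * (-(s/3 + y2^2 * s * c) * u - p2 * c^2 * u^2/9))))
       - (((1 - 2 * c * (1-c) * u) - 2 * v) * (p1 * y2 - p2 * (s/3 + y2^2 * s * c) * u - p2^2 * c^2 * u^2/18)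
         + ((1 - 2 * c * (1-c) * u) + ((1 - 2 * c * (1-c) * u) - 2 * v)/2 + 2 * s^2 * (M+2 * c^2) * u * w * v)
           * (p2 * (c * u/3))^2)
       = p2 * E2 + p2 * y2^2 * E3 + p2^2 * E4"
    unfolding E2_def E3_def E4_def by (simp add: field_simps power2_eq_square power3_eq_cube)
  show ?thesis using comb E2z E3z E4z by simp
qed

lemma mm4: "\<lbrakk>\<bar>a\<bar> \<le> A; \<bar>b\<bar> \<le> B\<rbrakk> \<Longrightarrow> \<bar>a * b\<bar> \<le> A * (B::real)"
  by (simp add: abs_mult mult_mono')

lemma lin_aux:
  fixes a b K P X Y Q :: real
  assumes "828/1000 * a \<le> K" "P \<le> 1062/1000 * a" "\<bar>X\<bar> \<le> 36/1000 * a" "\<bar>Y\<bar> \<le> Q * (3/100)"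
    "Q \<le> (b+a)/2" "a \<ge> 0" "b \<ge> 0"
  shows "(b+a)/5 \<le> K - P/2 + X + b/2 - Y"
  using assms abs_le_D2[OF assms(3)] abs_le_D1[OF assms(4)] by (simp add: field_simps)

lemma zd_bound:
  fixes s c M u v w y2 p1 p2 :: real
  assumes sc: "s^2 + c^2 = 1" and Mdef: "3 * M = 3 * s^2 + 1" and u: "u * M = 1" and v: "v * (1 + c) = 1" and w: "w * c = 1"
    and c0: "c > 0" and bs: "\<bar>s\<bar> \<le> 1/10" and by2: "\<bar>y2\<bar> \<le> 1/10" and bp1: "\<bar>p1\<bar> \<le> 1/10" and bp2: "\<bar>p2\<bar> \<le> 1/10"
  shows "((1 - 2 * c * (1-c) * u) + ((1 - 2 * c * (1-c) * u) - 2 * v)/2 + 2 * s^2 * (M+2 * c^2) * u * w * v) * (p2 * (c * u/3))^2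
      + ((- p2 * ((c/3 + y2^2 * (c^2-s^2)) * M - 2 * s * c * (s/3 + y2^2 * s * c)) * u^2 + p2^2 * (2 * s * c * (M+2 * c^2)) * u^3/18) * p2
         + p1 * (p1 - p2 * (2 * y2 * s * c) * u)) / 2 \<ge> (p1^2 + p2^2) / 5"
proof -
  have s2: "s^2 \<le> 1/100" using mm4[OF bs bs] by (simp add: power2_eq_square)
  have y22: "y2^2 \<le> 1/100" using mm4[OF by2 by2] by (simp add: power2_eq_square)
  have s2n: "s^2 \<ge> 0" "y2^2 \<ge> 0" "p1^2 \<ge> 0" "p2^2 \<ge> 0" by simp_all
  have c2: "c^2 \<ge> 99/100" using sc s2 by linarith
  have c2le: "c^2 \<le> 1" using sc s2n by linarith
  have cle1: "c \<le> 1" using c2le c0 by (metis abs_of_pos abs_square_le_1 less_imp_le)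
  have cc: "c * c \<le> c" using cle1 c0 by (simp add: mult_left_le)
  have cge: "c \<ge> 99/100" using cc c2 by (simp add: power2_eq_square)
  have Mlo: "M \<ge> 1/3" and Mhi: "M \<le> 1/3 + 1/100" using Mdef s2 s2n by linarith+
  have Mpos: "M > 0" using Mlo by linarith
  have uM: "u = 1 / M" using u Mpos by (simp add: field_simps)
  have uhi: "u \<le> 3" using Mlo Mpos by (simp add: uM field_simps)
  have ulo: "u \<ge> 300/103" using Mhi Mpos by (simp add: uM field_simps)
  have vv: "v = 1 / (1 + c)" using v c0 by (simp add: field_simps)
  have vhi: "v \<le> 100/199" using cge c0 by (simp add: vv field_simps)
  have vlo: "v \<ge> 0" using c0 by (simp add: vv)
  have ww: "w = 1 / c" using w c0 by (simp add: field_simps)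
  have wlo: "w \<ge> 0" using c0 by (simp add: ww)
  define mm where "mm = 1 - 2 * c * (1-c) * u"
  have t1: "c * (1 - c) \<le> 1/100"
  proof -
    have "1 - c \<le> 1/100" using cge by simp
    from mult_mono[OF cle1 this] show ?thesis using cle1 by simp
  qed
  have t2: "c * (1 - c) \<ge> 0" using cle1 c0 by simp
  have t3: "c * (1 - c) * u \<le> 3/100" using mult_mono[OF t1 uhi] ulo by simp
  have t4: "c * (1 - c) * u \<ge> 0" using t2 ulo by simp
  have mmlo: "mm \<ge> 94/100" and mmhi: "mm \<le> 1" using t3 t4 unfolding mm_def by linarith+
  define E where "E = 2 * s^2 * (M+2 * c^2) * u * w * v"
  have E0: "E \<ge> 0" unfolding E_def using s2n Mpos c0 ulo wlo vlo by simp
  define kap where "kap = mm + (mm - 2 * v)/2 + E"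
  have kaplo: "kap \<ge> 9/10"
  proof -
    have "(mm - 2 * v)/2 = mm/2 - v" by simp
    then show ?thesis using mmlo vhi E0 unfolding kap_def by linarith
  qed
  define b where "b = c * u/3"
  have blo: "b \<ge> 96/100" unfolding b_def using mult_mono[OF cge ulo] c0 by simp
  have b2: "b^2 \<ge> 92/100" using power_mono[OF blo, of 2] by (simp add: power2_eq_square)
  have kb: "kap * b^2 \<ge> 828/1000" using mult_mono[OF kaplo b2] kaplo by simp
  have T1: "kap * (p2 * b)^2 \<ge> 828/1000 * p2^2"
    using mult_right_mono[OF kb s2n(4)] by (simp add: power_mult_distrib mult_ac)
  define K1 where "K1 = (c/3 + y2^2 * (c^2-s^2)) * M - 2 * s * c * (s/3 + y2^2 * s * c)"
  have k1a: "c/3 + y2^2 * (c^2-s^2) \<le> 1/3 + 1/100"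
  proof -
    have "y2^2 * (c^2-s^2) \<le> 1/100 * 1" using mult_mono[OF y22, of "c^2-s^2" 1] s2n c2le c2 s2 by simp
    then show ?thesis using cle1 by simp
  qed
  have k1b: "c/3 + y2^2 * (c^2-s^2) \<ge> 0"
  proof -
    have "y2^2 * (c^2-s^2) \<ge> 0" using s2n c2 s2 by simp
    then show ?thesis using c0 by simp
  qed
  have k1c: "2 * s * c * (s/3 + y2^2 * s * c) \<ge> 0"
  proof -
    have "2 * s * c * (s/3 + y2^2 * s * c) = 2 * c * s^2 * (1/3 + y2^2 * c)" by (simp add: power2_eq_square algebra_simps)
    then show ?thesis using c0 s2n by simp
  qed
  have K1hi: "K1 \<le> 118/1000"
  proof -
    have "(c/3 + y2^2 * (c^2-s^2)) * M \<le> (1/3 + 1/100) * (1/3 + 1/100)"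
      using mult_mono[OF k1a Mhi] k1b Mpos by simp
    moreover have "(1/3 + 1/100) * (1/3 + 1/100) = (10609/90000::real)" by simp
    ultimately show ?thesis using k1c unfolding K1_def by linarith
  qed
  have u2: "u^2 \<le> 9" using power_mono[OF uhi, of 2] ulo by simp
  have K1u: "K1 * u^2 \<le> 1062/1000"
  proof (cases "K1 \<ge> 0")
    case True
    then show ?thesis using mult_mono[OF K1hi u2] by simp
  next
    case False
    then show ?thesis using mult_nonpos_nonneg[of K1 "u^2"] by simp
  qed
  have T2: "p2^2 * (K1 * u^2) \<le> 1062/1000 * p2^2"
    using mult_left_mono[OF K1u s2n(4)] by (simp add: mult_ac)
  define K2 where "K2 = 2 * s * c * (M+2 * c^2)"
  have K2b: "\<bar>K2\<bar> \<le> 47/100"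
  proof -
    have a1: "\<bar>2 * s * c\<bar> \<le> 2/10" using mm4[OF bs, of c 1] c0 cle1 by simp
    have a2: "\<bar>M+2 * c^2\<bar> \<le> 1/3 + 1/100 + 2" using Mhi Mpos c2le by simp
    show ?thesis using mm4[OF a1 a2] unfolding K2_def by simp
  qed
  have u3: "\<bar>u^3\<bar> \<le> 27" using power_mono[OF uhi, of 3] ulo by simp
  have T3: "\<bar>p2^2 * K2 * u^3 / 36 * p2\<bar> \<le> 36/1000 * p2^2"
  proof -
    have "\<bar>K2 * u^3\<bar> \<le> 47/100 * 27" using mm4[OF K2b u3] .
    then have "\<bar>K2 * u^3 * p2\<bar> \<le> 47/100 * 27 * (1/10)" using mm4[OF _ bp2] by blast
    then have "\<bar>K2 * u^3 * p2\<bar> / 36 \<le> 36/1000" by simp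
    then have "p2^2 * (\<bar>K2 * u^3 * p2\<bar> / 36) \<le> p2^2 * (36/1000)" using s2n(4) by (rule mult_left_mono)
    then show ?thesis by (simp add: abs_mult mult_ac)
  qed
  have T4: "\<bar>p1 * p2 * (y2 * s * c * u)\<bar> \<le> \<bar>p1 * p2\<bar> * (3/100)"
  proof -
    have "\<bar>y2 * s\<bar> \<le> 1/10 * (1/10)" using mm4[OF by2 bs] .
    moreover have "\<bar>c * u\<bar> \<le> 1 * 3" using mm4[of c 1 u 3] c0 cle1 uhi ulo by simp
    ultimately have "\<bar>y2 * s * (c * u)\<bar> \<le> 1/10 * (1/10) * (1 * 3)" using mm4 by blast
    then have "\<bar>y2 * s * (c * u)\<bar> \<le> 3/100" by simp
    then have "\<bar>p1 * p2\<bar> * \<bar>y2 * s * (c * u)\<bar> \<le> \<bar>p1 * p2\<bar> * (3/100)"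
      by (rule mult_left_mono) simp
    then show ?thesis by (simp add: abs_mult mult_ac)
  qed
  have T5: "\<bar>p1 * p2\<bar> \<le> (p1^2 + p2^2) / 2"
  proof -
    have "0 \<le> (\<bar>p1\<bar> - \<bar>p2\<bar>)^2" by simp
    then show ?thesis by (simp add: power2_eq_square abs_mult algebra_simps)
  qed
  have eq: "((1 - 2 * c * (1-c) * u) + ((1 - 2 * c * (1-c) * u) - 2 * v)/2 + 2 * s^2 * (M+2 * c^2) * u * w * v) * (p2 * (c * u/3))^2
      + ((- p2 * ((c/3 + y2^2 * (c^2-s^2)) * M - 2 * s * c * (s/3 + y2^2 * s * c)) * u^2 + p2^2 * (2 * s * c * (M+2 * c^2)) * u^3/18) * p2
         + p1 * (p1 - p2 * (2 * y2 * s * c) * u)) / 2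
      = kap * (p2 * b)^2 - p2^2 * (K1 * u^2) / 2 + p2^2 * K2 * u^3 / 36 * p2 + p1^2/2 - p1 * p2 * (y2 * s * c * u)"
    unfolding kap_def mm_def E_def b_def K1_def K2_def by (simp add: field_simps power2_eq_square power3_eq_cube)
  have A1: "- \<bar>p2^2 * K2 * u^3 / 36 * p2\<bar> \<le> p2^2 * K2 * u^3 / 36 * p2" by linarith
  have A2: "p1 * p2 * (y2 * s * c * u) \<le> \<bar>p1 * p2 * (y2 * s * c * u)\<bar>" by linarith
  show ?thesis unfolding eq by (rule lin_aux[OF T1 T2 T3 T4 T5 s2n(4) s2n(3)])
qed

lemma abs3: "\<bar>A\<bar> \<le> a \<Longrightarrow> \<bar>B\<bar> \<le> b \<Longrightarrow> \<bar>C\<bar> \<le> d \<Longrightarrow> \<bar>-(A+B) - C\<bar> \<le> a + b + (d::real)"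
  by (simp add: abs_le_iff)

lemma lin2: "Z2 \<le> (16/100 * X)^2 \<Longrightarrow> X^2 \<le> 2 * S \<Longrightarrow> S \<ge> 0 \<Longrightarrow> 3 * Z2 \<le> S / (5::real)"
  by (simp add: power_mult_distrib field_simps)

lemma zf_bound:
  fixes s c M u v y2 p1 p2 :: real
  assumes sc: "s^2 + c^2 = 1" and Mdef: "3 * M = 3 * s^2 + 1" and u: "u * M = 1" and v: "v * (1 + c) = 1"
    and c0: "c > 0" and bs: "\<bar>s\<bar> \<le> 1/10" and by2: "\<bar>y2\<bar> \<le> 1/10" and bp1: "\<bar>p1\<bar> \<le> 1/10" and bp2: "\<bar>p2\<bar> \<le> 1/10"
  shows "3 * (-(p1 * (2 * s * v) + p2 * (y2 * (1 - 2 * c * (1-c) * u))) - p1 * p2/2)^2 \<le> (p1^2 + p2^2) / 5"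
    and "\<bar>-(p1 * (2 * s * v) + p2 * (y2 * (1 - 2 * c * (1-c) * u))) - p1 * p2/2\<bar> \<le> 4/100"
proof -
  have s2: "s^2 \<le> 1/100" using mm4[OF bs bs] by (simp add: power2_eq_square)
  have s2n: "s^2 \<ge> 0" "y2^2 \<ge> 0" "p1^2 \<ge> 0" "p2^2 \<ge> 0" by simp_all
  have c2: "c^2 \<ge> 99/100" using sc s2 by linarith
  have c2le: "c^2 \<le> 1" using sc s2n by linarith
  have cle1: "c \<le> 1" using c2le c0 by (metis abs_of_pos abs_square_le_1 less_imp_le)
  have cc: "c * c \<le> c" using cle1 c0 by (simp add: mult_left_le)
  have cge: "c \<ge> 99/100" using cc c2 by (simp add: power2_eq_square)
  have Mlo: "M \<ge> 1/3" using Mdef s2 s2n by linarith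
  have Mpos: "M > 0" using Mlo by linarith
  have uM: "u = 1 / M" using u Mpos by (simp add: field_simps)
  have uhi: "u \<le> 3" using Mlo Mpos by (simp add: uM field_simps)
  have ulo: "u \<ge> 0" using Mpos by (simp add: uM)
  have vv: "v = 1 / (1 + c)" using v c0 by (simp add: field_simps)
  have vhi: "v \<le> 100/199" using cge c0 by (simp add: vv field_simps)
  have vlo: "v \<ge> 0" using c0 by (simp add: vv)
  have t1: "c * (1 - c) \<le> 1/100"
  proof -
    have "1 - c \<le> 1/100" using cge by simp
    from mult_mono[OF cle1 this] show ?thesis using cle1 by simp
  qed
  have t2: "c * (1 - c) \<ge> 0" using cle1 c0 by simp
  have t3: "c * (1 - c) * u \<le> 3/100" using mult_mono[OF t1 uhi] ulo by simp
  have t4: "c * (1 - c) * u \<ge> 0" using t2 ulo by simp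
  have mmb: "\<bar>1 - 2 * c * (1-c) * u\<bar> \<le> 1"
  proof -
    have "2 * c * (1-c) * u = 2 * (c * (1-c) * u)" by simp
    then show ?thesis using t3 t4 by (simp only: abs_le_iff) linarith
  qed
  have a1: "\<bar>2 * s * v\<bar> \<le> 11/100"
  proof -
    have "\<bar>2 * s\<bar> \<le> 2/10" using bs by simp
    from mm4[OF this, of v "100/199"] show ?thesis using vhi vlo by simp
  qed
  have e1: "\<bar>p1 * (2 * s * v)\<bar> \<le> \<bar>p1\<bar> * (11/100)"
    using mult_left_mono[OF a1 abs_ge_zero[of p1]] by (simp only: abs_mult)
  have a2: "\<bar>y2 * (1 - 2 * c * (1-c) * u)\<bar> \<le> 1/10 * 1" using mm4[OF by2 mmb] .
  have e2: "\<bar>p2 * (y2 * (1 - 2 * c * (1-c) * u))\<bar> \<le> \<bar>p2\<bar> * (1/10)"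
    using mult_left_mono[OF a2 abs_ge_zero[of p2]] by (simp only: abs_mult)
  have e3: "\<bar>p1 * p2/2\<bar> \<le> \<bar>p1\<bar> * (1/20)"
  proof -
    have "\<bar>p2/2\<bar> \<le> 1/20" using bp2 by simp
    from mult_left_mono[OF this abs_ge_zero[of p1]] show ?thesis by (simp add: abs_mult)
  qed
  have R: "\<bar>-(p1 * (2 * s * v) + p2 * (y2 * (1 - 2 * c * (1-c) * u))) - p1 * p2/2\<bar> \<le> 16/100 * (\<bar>p1\<bar> + \<bar>p2\<bar>)"
  proof -
    have "\<bar>p1\<bar> * (11/100) + \<bar>p2\<bar> * (1/10) + \<bar>p1\<bar> * (1/20) \<le> 16/100 * (\<bar>p1\<bar> + \<bar>p2\<bar>)"
      by (simp add: field_simps)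
    then show ?thesis using abs3[OF e1 e2 e3] by linarith
  qed
  then show "\<bar>-(p1 * (2 * s * v) + p2 * (y2 * (1 - 2 * c * (1-c) * u))) - p1 * p2/2\<bar> \<le> 4/100"
    using bp1 bp2 by simp
  have sq: "(-(p1 * (2 * s * v) + p2 * (y2 * (1 - 2 * c * (1-c) * u))) - p1 * p2/2)^2 \<le> (16/100 * (\<bar>p1\<bar> + \<bar>p2\<bar>))^2"
    using power_mono[OF R, of 2] by simp
  have "(\<bar>p1\<bar> + \<bar>p2\<bar>)^2 \<le> 2 * (p1^2 + p2^2)"
  proof -
    have "0 \<le> (\<bar>p1\<bar> - \<bar>p2\<bar>)^2" by simp
    then show ?thesis by (simp add: power2_eq_square algebra_simps)
  qed
  then show "3 * (-(p1 * (2 * s * v) + p2 * (y2 * (1 - 2 * c * (1-c) * u))) - p1 * p2/2)^2 \<le> (p1^2 + p2^2) / 5"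
    using lin2[OF sq] s2n by simp
qed

definition ZD :: "real \<Rightarrow> real \<Rightarrow> real \<Rightarrow> real \<Rightarrow> real \<Rightarrow> real \<Rightarrow> real \<Rightarrow> real \<Rightarrow> real" where
  "ZD s c M u v y2 p1 p2 = -((-(- p2 * ((c/3 + y2^2 * (c^2-s^2)) * M - 2 * s * c * (s/3 + y2^2 * s * c)) * u^2 + p2^2 * (2 * s * c * (M+2 * c^2)) * u^3/18)) * (2 * s * v)
          + p1 * (2 * v) * y2
          + (-(p1 - p2 * (2 * y2 * s * c) * u)) * (y2 * (1 - 2 * c * (1-c) * u))
          + p2 * (y2 * (-(2 * s * (2 * c-1) * M - 4 * s * c^2 * (1-c)) * u^2) * y2
                  + (1 - 2 * c * (1-c) * u) * (-(s/3 + y2^2 * s * c) * u - p2 * c^2 * u^2/9)))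
     + ((- p2 * ((c/3 + y2^2 * (c^2-s^2)) * M - 2 * s * c * (s/3 + y2^2 * s * c)) * u^2 + p2^2 * (2 * s * c * (M+2 * c^2)) * u^3/18) * p2
         + p1 * (p1 - p2 * (2 * y2 * s * c) * u)) / 2"

definition HX :: "real \<Rightarrow> real \<Rightarrow> real \<Rightarrow> real \<Rightarrow> real \<Rightarrow> real \<Rightarrow> real" where
  "HX s c u y2 p1 p2 = p1 * y2 - p2 * (s/3 + y2^2 * s * c) * u - p2^2 * c^2 * u^2/18"

definition ZZ :: "real \<Rightarrow> real \<Rightarrow> real \<Rightarrow> real \<Rightarrow> real \<Rightarrow> real \<Rightarrow> real \<Rightarrow> real" where
  "ZZ s c u v y2 p1 p2 = -(p1 * (2 * s * v) + p2 * (y2 * (1 - 2 * c * (1-c) * u))) - p1 * p2/2"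

lemma ZD_ge:
  fixes s c M u v w y2 p1 p2 :: real
  assumes sc: "s^2 + c^2 = 1" and Mdef: "3 * M = 3 * s^2 + 1" and u: "u * M = 1" and v: "v * (1 + c) = 1" and w: "w * c = 1"
    and c0: "c > 0" and bs: "\<bar>s\<bar> \<le> 1/10" and by2: "\<bar>y2\<bar> \<le> 1/10" and bp1: "\<bar>p1\<bar> \<le> 1/10" and bp2: "\<bar>p2\<bar> \<le> 1/10"
    and H0: "HX s c u y2 p1 p2 = 0"
  shows "ZD s c M u v y2 p1 p2 \<ge> 3 * (ZZ s c u v y2 p1 p2)^2"
    and "\<bar>ZZ s c u v y2 p1 p2\<bar> \<le> 4/100"
proof -
  have H0': "p1 * y2 - p2 * (s/3 + y2^2 * s * c) * u - p2^2 * c^2 * u^2/18 = 0"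
    using H0 unfolding HX_def .
  have "ZD s c M u v y2 p1 p2 \<ge> (p1^2 + p2^2) / 5"
    unfolding ZD_def vd_identity_poly[OF sc Mdef u v w] H0'
    by (simp only: mult_zero_right add_0_left) (rule zd_bound[OF sc Mdef u v w c0 bs by2 bp1 bp2])
  then show "ZD s c M u v y2 p1 p2 \<ge> 3 * (ZZ s c u v y2 p1 p2)^2"
    using zf_bound(1)[OF sc Mdef u v c0 bs by2 bp1 bp2] unfolding ZZ_def by linarith
  show "\<bar>ZZ s c u v y2 p1 p2\<bar> \<le> 4/100"
    using zf_bound(2)[OF sc Mdef u v c0 bs by2 bp1 bp2] unfolding ZZ_def .
qed

lemma vd_comp:
  assumes "(x has_vector_derivative (A, B, C, D)) F"
  shows "((\<lambda>t. fst (x t)) has_real_derivative A) F"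
    "((\<lambda>t. fst (snd (x t))) has_real_derivative B) F"
    "((\<lambda>t. fst (snd (snd (x t)))) has_real_derivative C) F"
    "((\<lambda>t. snd (snd (snd (x t)))) has_real_derivative D) F"
proof -
  have h: "(x has_derivative (\<lambda>h. h *\<^sub>R (A, B, C, D))) F" using assms by (simp add: has_vector_derivative_def)
  have 1: "((\<lambda>t. fst (x t)) has_derivative (\<lambda>h. fst (h *\<^sub>R (A, B, C, D)))) F"
    by (rule has_derivative_fst[OF h])
  have 2: "((\<lambda>t. snd (x t)) has_derivative (\<lambda>h. snd (h *\<^sub>R (A, B, C, D)))) F"
    by (rule has_derivative_snd[OF h])
  have 3: "((\<lambda>t. fst (snd (x t))) has_derivative (\<lambda>h. fst (snd (h *\<^sub>R (A, B, C, D))))) F"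
    by (rule has_derivative_fst[OF 2])
  have 4: "((\<lambda>t. snd (snd (x t))) has_derivative (\<lambda>h. snd (snd (h *\<^sub>R (A, B, C, D))))) F"
    by (rule has_derivative_snd[OF 2])
  have 5: "((\<lambda>t. fst (snd (snd (x t)))) has_derivative (\<lambda>h. fst (snd (snd (h *\<^sub>R (A, B, C, D)))))) F"
    by (rule has_derivative_fst[OF 4])
  have 6: "((\<lambda>t. snd (snd (snd (x t)))) has_derivative (\<lambda>h. snd (snd (snd (h *\<^sub>R (A, B, C, D)))))) F"
    by (rule has_derivative_snd[OF 4])
  have e: "(\<lambda>h. h * K) = (*) K" for K :: real by (rule ext) simp
  show "((\<lambda>t. fst (x t)) has_real_derivative A) F" using 1
    by (simp add: has_field_derivative_def e)
  show "((\<lambda>t. fst (snd (x t))) has_real_derivative B) F" using 3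
    by (simp add: has_field_derivative_def e)
  show "((\<lambda>t. fst (snd (snd (x t)))) has_real_derivative C) F" using 5
    by (simp add: has_field_derivative_def e)
  show "((\<lambda>t. snd (snd (snd (x t)))) has_real_derivative D) F" using 6
    by (simp add: has_field_derivative_def e)
qed

lemma iM_deriv: "(iM has_real_derivative -(2 * sin y * cos y) * (iM y)^2) (at y)"
proof -
  have M: "Mf y \<noteq> 0" using Mf_pos[of y] by linarith
  show ?thesis unfolding iM_def[abs_def]
    by (rule derivative_eq_intros Mf_deriv refl | simp add: M)+ (simp add: field_simps power2_eq_square M)
qed

definition al :: "real \<Rightarrow> real" where "al y = 2 * sin y * (1 / (1 + cos y))"
definition mmf :: "real \<Rightarrow> real" where "mmf y = 1 - 2 * cos y * (1 - cos y) * iM y"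

lemma al_aux: fixes s c :: real assumes "1 + c \<noteq> 0" "s * s = 1 - c * c"
  shows "c * 2/(1+c) + s * (s * 2)/(1 + (c * c + c * 2)) = 2/(1+c)"
proof -
  have d: "1 + (c * c + c * 2) = (1+c) * (1+c)" by algebra
  have n: "s * (s * 2) = 2 * (1-c) * (1+c)" using assms(2) by algebra
  have "s * (s * 2)/(1 + (c * c + c * 2)) = (2 * (1-c))/(1+c)" unfolding d n using assms(1) by simp
  moreover have "c * 2/(1+c) + (2 * (1-c))/(1+c) = 2/(1+c)"
    by (simp add: add_divide_distrib[symmetric] algebra_simps)
  ultimately show ?thesis by simp
qed

lemma al_deriv: assumes "cos y > 0" shows "(al has_real_derivative 2 * (1 / (1 + cos y))) (at y)"
proof -
  have c: "1 + cos y \<noteq> 0" using assms by linarith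
  show ?thesis unfolding al_def[abs_def]
    apply (rule derivative_eq_intros refl | simp add: c)+
    using c al_aux[OF c, of "sin y"] sin_cos_squared_add3[of y] by (simp add: algebra_simps)
qed

lemma mmf_deriv: "(mmf has_real_derivative -(2 * sin y * (2 * cos y-1) * Mf y - 4 * sin y * (cos y)^2 * (1-cos y)) * (iM y)^2) (at y)"
proof -
  have M: "Mf y \<noteq> 0" using Mf_pos[of y] by linarith
  show ?thesis unfolding mmf_def[abs_def]
    apply (rule derivative_eq_intros iM_deriv refl)+
    using M by (simp add: iM_def field_simps power2_eq_square)
qed

lemma H_u: "H y1 y2 p1 p2 = p1 * y2 - p2 * (sin y1 / 3 + y2^2 * sin y1 * cos y1) * iM y1
   - p2^2 * (cos y1)\<^sup>2 * (iM y1)^2 / 18"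
  using Mf_pos[of y1] by (simp add: H_alt iM_def field_simps power2_eq_square)

lemma iM_Mf: "iM y * Mf y = 1"
  using Mf_pos[of y] by (simp add: iM_def)

lemma H_deriv_test:
  assumes ha: "(a has_real_derivative b t) (at t within S)"
    and hb: "(b has_real_derivative Fp2 (a t) (b t) (d t)) (at t within S)"
    and hc: "(c has_real_derivative - Fy1 (a t) (b t) (d t)) (at t within S)"
    and hd: "(d has_real_derivative - Fy2 (a t) (b t) (c t) (d t)) (at t within S)"
  shows "((\<lambda>t. H (a t) (b t) (c t) (d t)) has_real_derivative 0) (at t within S)"
proof -
  have hM: "((\<lambda>t. iM (a t)) has_real_derivative (-(2 * sin (a t) * cos (a t)) * (iM (a t))^2) * b t) (at t within S)"
    by (rule DERIV_chain2[OF iM_deriv ha])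
  show ?thesis unfolding H_u
    apply (rule derivative_eq_intros ha hb hc hd hM refl | (simp; fail))+
    unfolding Fp2_alt Fy1_alt Fy2_alt
    using iM_Mf[of "a t"] by (simp; algebra)
qed

definition vf :: "real \<Rightarrow> real" where "vf y = 1 / (1 + cos y)"

lemma vf_deriv: assumes "cos y > 0" shows "(vf has_real_derivative sin y * (vf y)^2) (at y)"
proof -
  have c: "1 + cos y \<noteq> 0" using assms by linarith
  show ?thesis unfolding vf_def[abs_def]
    apply (rule derivative_eq_intros refl | (simp add: c; fail))+
    using c by (simp add: field_simps power2_eq_square)
qed

definition Zf :: "real \<Rightarrow> real \<Rightarrow> real \<Rightarrow> real \<Rightarrow> real" where
  "Zf y1 y2 p1 p2 = -(p1 * al y1 + p2 * (y2 * mmf y1)) - p1 * p2 / 2"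

lemma Zf_ZZ: "Zf y1 y2 p1 p2 = ZZ (sin y1) (cos y1) (iM y1) (1 / (1 + cos y1)) y2 p1 p2"
  unfolding Zf_def ZZ_def al_def mmf_def by simp

lemma Z_deriv:
  assumes ha: "(a has_real_derivative b t) (at t within S)"
    and hb: "(b has_real_derivative Fp2 (a t) (b t) (d t)) (at t within S)"
    and hc: "(c has_real_derivative - Fy1 (a t) (b t) (d t)) (at t within S)"
    and hd: "(d has_real_derivative - Fy2 (a t) (b t) (c t) (d t)) (at t within S)"
    and cp: "cos (a t) > 0"
  shows "((\<lambda>t. Zf (a t) (b t) (c t) (d t)) has_real_derivative
     ZD (sin (a t)) (cos (a t)) (Mf (a t)) (iM (a t)) (1 / (1 + cos (a t))) (b t) (c t) (d t)) (at t within S)"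
proof -
  have hA: "((\<lambda>t. al (a t)) has_real_derivative (2 * (1 / (1 + cos (a t)))) * b t) (at t within S)"
    by (rule DERIV_chain2[OF al_deriv[OF cp] ha])
  have hB: "((\<lambda>t. mmf (a t)) has_real_derivative
      (-(2 * sin (a t) * (2 * cos (a t) - 1) * Mf (a t) - 4 * sin (a t) * (cos (a t))^2 * (1 - cos (a t))) * (iM (a t))^2) * b t) (at t within S)"
    by (rule DERIV_chain2[OF mmf_deriv ha])
  have e: "al (a t) = 2 * sin (a t) * (1 / (1 + cos (a t)))" "mmf (a t) = 1 - 2 * cos (a t) * (1 - cos (a t)) * iM (a t)"
    by (simp_all add: al_def mmf_def)
  show ?thesis unfolding Zf_def
    apply (rule derivative_eq_intros ha hb hc hd hA hB refl | (simp; fail))+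
    unfolding Fp2_alt Fy1_alt Fy2_alt ZD_def e
    using cp by (simp add: field_simps)
qed

lemma cos_pos_small: "\<bar>y::real\<bar> \<le> 1/10 \<Longrightarrow> cos y > 0"
  using pi_gt3 by (intro cos_gt_zero_pi) auto

lemma Z0_pos: assumes "0 < \<delta>" "\<delta> \<le> 1/10" shows "Zf (-\<delta>) 0 \<delta> 0 > 0"
proof -
  have s: "sin \<delta> > 0" using assms pi_gt3 by (intro sin_gt_zero) auto
  have c: "cos \<delta> > 0" using assms by (intro cos_pos_small) auto
  show ?thesis unfolding Zf_def al_def using assms s c by (simp add: field_simps)
qed

lemma chetaev:
  fixes x :: "real \<Rightarrow> R4"
  assumes T0: "0 \<le> T" and x0: "x 0 = (-\<delta>, 0, \<delta>, 0)" and dpos: "0 < \<delta>" "\<delta> \<le> 1/10"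
    and der: "\<And>t. t \<in> {0..T} \<Longrightarrow> (x has_vector_derivative ham_field (x t)) (at t within {0..T})"
    and box: "\<And>t. t \<in> {0..T} \<Longrightarrow> \<bar>fst (x t)\<bar> \<le> 1/10 \<and> \<bar>fst (snd (x t))\<bar> \<le> 1/10
        \<and> \<bar>fst (snd (snd (x t)))\<bar> \<le> 1/10 \<and> \<bar>snd (snd (snd (x t)))\<bar> \<le> 1/10"
  shows "3 * (Zf (-\<delta>) 0 \<delta> 0)^2 * T \<le> 8/100"
proof -
  define a where "a t = fst (x t)" for t
  define b where "b t = fst (snd (x t))" for t
  define c where "c t = fst (snd (snd (x t)))" for t
  define d where "d t = snd (snd (snd (x t)))" for t
  have xt: "x t = (a t, b t, c t, d t)" for t by (simp add: a_def b_def c_def d_def)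
  have bx: "\<bar>a t\<bar> \<le> 1/10" "\<bar>b t\<bar> \<le> 1/10" "\<bar>c t\<bar> \<le> 1/10" "\<bar>d t\<bar> \<le> 1/10" if "t \<in> {0..T}" for t
    using box[OF that] by (simp_all add: a_def b_def c_def d_def)
  have cp: "cos (a t) > 0" if "t \<in> {0..T}" for t using bx(1)[OF that] by (rule cos_pos_small)
  have dd: "(a has_real_derivative b t) (at t within {0..T})"
     "(b has_real_derivative Fp2 (a t) (b t) (d t)) (at t within {0..T})"
     "(c has_real_derivative - Fy1 (a t) (b t) (d t)) (at t within {0..T})"
     "(d has_real_derivative - Fy2 (a t) (b t) (c t) (d t)) (at t within {0..T})" if "t \<in> {0..T}" for t
  proof -
    have v: "(x has_vector_derivative (b t, Fp2 (a t) (b t) (d t), - Fy1 (a t) (b t) (d t), - Fy2 (a t) (b t) (c t) (d t))) (at t within {0..T})"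
      using der[OF that] by (simp add: xt ham_field_eq)
    note vd = vd_comp[OF v]
    show "(a has_real_derivative b t) (at t within {0..T})" using vd(1) by (simp add: a_def[abs_def])
    show "(b has_real_derivative Fp2 (a t) (b t) (d t)) (at t within {0..T})" using vd(2) by (simp add: b_def[abs_def])
    show "(c has_real_derivative - Fy1 (a t) (b t) (d t)) (at t within {0..T})" using vd(3) by (simp add: c_def[abs_def])
    show "(d has_real_derivative - Fy2 (a t) (b t) (c t) (d t)) (at t within {0..T})" using vd(4) by (simp add: d_def[abs_def])
  qed
  have a0: "a 0 = -\<delta>" "b 0 = 0" "c 0 = \<delta>" "d 0 = 0" using x0 by (simp_all add: a_def b_def c_def d_def)
  have "\<exists>C. \<forall>t\<in>{0..T}. H (a t) (b t) (c t) (d t) = C"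
  proof (rule has_field_derivative_zero_constant)
    show "convex {0..T}" by simp
    fix t assume t: "t \<in> {0..T}"
    show "((\<lambda>t. H (a t) (b t) (c t) (d t)) has_real_derivative 0) (at t within {0..T})"
      by (rule H_deriv_test[OF dd[OF t]])
  qed
  then obtain C where C: "\<And>t. t \<in> {0..T} \<Longrightarrow> H (a t) (b t) (c t) (d t) = C" by blast
  have "C = 0" using C[of 0] T0 a0 by (simp add: H_def)
  then have H0: "H (a t) (b t) (c t) (d t) = 0" if "t \<in> {0..T}" for t using C[OF that] by simp
  define Z where "Z t = Zf (a t) (b t) (c t) (d t)" for t
  define ZDt where "ZDt t = ZD (sin (a t)) (cos (a t)) (Mf (a t)) (iM (a t)) (1 / (1 + cos (a t))) (b t) (c t) (d t)" for t
  have Zder: "(Z has_real_derivative ZDt t) (at t within {0..T})" if "t \<in> {0..T}" for t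
    unfolding Z_def[abs_def] ZDt_def using Z_deriv[OF dd[OF that] cp[OF that]] .
  have Zb: "ZDt t \<ge> 3 * (Z t)^2 \<and> \<bar>Z t\<bar> \<le> 4/100" if t: "t \<in> {0..T}" for t
  proof -
    have c0: "cos (a t) > 0" by (rule cp[OF t])
    have sc: "(sin (a t))^2 + (cos (a t))^2 = 1" by simp
    have Md: "3 * Mf (a t) = 3 * (sin (a t))^2 + 1" by (simp add: Mf_def)
    have v: "1 / (1 + cos (a t)) * (1 + cos (a t)) = 1" using c0 by simp
    have w: "1 / cos (a t) * cos (a t) = 1" using c0 by simp
    have bs: "\<bar>sin (a t)\<bar> \<le> 1/10" using abs_sin_x_le_abs_x[of "a t"] bx(1)[OF t] by linarith
    have HX0: "HX (sin (a t)) (cos (a t)) (iM (a t)) (b t) (c t) (d t) = 0"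
      using H0[OF t] unfolding H_u HX_def .
    note r = ZD_ge[OF sc Md iM_Mf v w c0 bs bx(2-4)[OF t] HX0]
    show ?thesis using r unfolding ZDt_def Z_def Zf_ZZ by simp
  qed
  have Zcont: "continuous_on {0..T} Z"
    using Zder DERIV_continuous continuous_on_eq_continuous_within by blast
  have atI: "at s within {0..T} = at s" if "0 < s" "s < T" for s using that by (rule at_within_Icc_at)
  have mono: "Z 0 \<le> Z t" if t: "t \<in> {0..T}" for t
  proof (rule DERIV_nonneg_imp_increasing_open[of 0 t Z])
    show "0 \<le> t" using t by simp
    show "continuous_on {0..t} Z" using Zcont t by (elim continuous_on_subset) auto
    fix s assume s: "0 < s" "s < t"
    have "(Z has_real_derivative ZDt s) (at s)" using Zder[of s] s t atI[of s] by auto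
    moreover have "ZDt s \<ge> 0"
    proof -
      have "3 * (Z s)^2 \<le> ZDt s" using Zb[of s] s t by auto
      moreover have "0 \<le> 3 * (Z s)^2" by simp
      ultimately show ?thesis by linarith
    qed
    ultimately show "\<exists>y. (Z has_real_derivative y) (at s) \<and> 0 \<le> y" by blast
  qed
  define Z0 where "Z0 = Z 0"
  have Z0eq: "Z0 = Zf (-\<delta>) 0 \<delta> 0" unfolding Z0_def Z_def a0 ..
  have Z0p: "Z0 > 0" unfolding Z0eq using Z0_pos dpos by blast
  define g where "g t = Z t - 3 * Z0^2 * t" for t
  have "g 0 \<le> g T"
  proof (rule DERIV_nonneg_imp_increasing_open[of 0 T g])
    show "0 \<le> T" by (rule T0)
    show "continuous_on {0..T} g" unfolding g_def[abs_def] by (intro continuous_intros Zcont)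
    fix s assume s: "0 < s" "s < T"
    have "(Z has_real_derivative ZDt s) (at s)" using Zder[of s] s atI[of s] by auto
    then have "(g has_real_derivative ZDt s - 3 * Z0^2) (at s)"
      unfolding g_def[abs_def] by (auto intro!: derivative_eq_intros)
    moreover have "ZDt s - 3 * Z0^2 \<ge> 0"
    proof -
      have "Z0 \<le> Z s" using mono[of s] s unfolding Z0_def by auto
      then have "Z0^2 \<le> (Z s)^2" using Z0p by (intro power_mono) auto
      then show ?thesis using Zb[of s] s by auto
    qed
    ultimately show "\<exists>y. (g has_real_derivative y) (at s) \<and> 0 \<le> y" by blast
  qed
  then have "3 * Z0^2 * T \<le> Z T - Z 0" unfolding g_def by simp
  moreover have "\<bar>Z T\<bar> \<le> 4/100" "\<bar>Z 0\<bar> \<le> 4/100" using Zb[of T] Zb[of 0] T0 by auto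
  ultimately show ?thesis unfolding Z0eq[symmetric] by linarith
qed

lemma norm4_le: "norm (x1, x2, x3, x4) \<le> \<bar>x1\<bar> + \<bar>x2\<bar> + \<bar>x3\<bar> + \<bar>(x4::real)\<bar>"
proof -
  have "norm (x1, x2, x3, x4) \<le> norm x1 + norm (x2, x3, x4)" by (rule norm_Pair_le)
  also have "norm (x2, x3, x4) \<le> norm x2 + norm (x3, x4)" by (rule norm_Pair_le)
  also have "norm (x3, x4) \<le> norm x3 + norm x4" by (rule norm_Pair_le)
  finally show ?thesis by simp
qed

definition Ubox :: "R4 set" where
  "Ubox = {z. \<bar>fst z\<bar> < 1/10 \<and> \<bar>fst (snd z)\<bar> < 1/10 \<and> \<bar>fst (snd (snd z))\<bar> < 1/10 \<and> \<bar>snd (snd (snd z))\<bar> < 1/10}"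
definition Kbox :: "R4 set" where
  "Kbox = {z. \<bar>fst z\<bar> \<le> 1/10 \<and> \<bar>fst (snd z)\<bar> \<le> 1/10 \<and> \<bar>fst (snd (snd z))\<bar> \<le> 1/10 \<and> \<bar>snd (snd (snd z))\<bar> \<le> 1/10}"

lemma open_Ubox: "open Ubox"
  unfolding Ubox_def by (intro open_Collect_conj open_Collect_less continuous_intros)

lemma closed_Kbox: "closed Kbox"
  unfolding Kbox_def by (intro closed_Collect_conj closed_Collect_le continuous_intros)

lemma Ubox_Kbox: "Ubox \<subseteq> Kbox"
  unfolding Ubox_def Kbox_def by auto

lemma cl_id: "z \<in> Kbox \<Longrightarrow> cl z = z"
  unfolding Kbox_def cl_def Y1_def Y2_def Y3_def Y4_def by (auto simp: clamp_id)

theorem mainTheorem1: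
  shows "\<exists>U::(real \<times> real \<times> real \<times> real) set. open U \<and> 0 \<in> U \<and>
           (\<forall>W. open W \<and> 0 \<in> W \<longrightarrow>
              (\<exists>x T. T \<ge> 0 \<and> x 0 \<in> W \<and> ham_solution x T \<and> x T \<notin> U))"
proof -
  have main: "\<exists>x T. T \<ge> 0 \<and> x 0 \<in> W \<and> ham_solution x T \<and> x T \<notin> Ubox" if W: "open W \<and> 0 \<in> W" for W :: "R4 set"
  proof -
  from W obtain e where e: "e > 0" "ball 0 e \<subseteq> W" by (meson openE)
  define \<delta> where "\<delta> = min (e/3) (1/20)"
  have dpos: "0 < \<delta>" "\<delta> \<le> 1/10" using e by (auto simp: \<delta>_def)
  define z0 :: R4 where "z0 = (-\<delta>, 0, \<delta>, 0)"
  have z0W: "z0 \<in> W"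
  proof -
    have "norm z0 \<le> \<bar>-\<delta>\<bar> + \<bar>0\<bar> + \<bar>\<delta>\<bar> + \<bar>0\<bar>" unfolding z0_def by (rule norm4_le)
    also have "\<dots> < e" using dpos e by (simp add: \<delta>_def)
    finally show ?thesis using e by auto
  qed
  have d20: "\<delta> \<le> 1/20" by (simp add: \<delta>_def)
  have z0U: "z0 \<in> Ubox" using dpos d20 by (simp add: z0_def Ubox_def)
  define Z0 where "Z0 = Zf (-\<delta>) 0 \<delta> 0"
  have Z0p: "Z0 > 0" unfolding Z0_def using Z0_pos dpos by blast
  define T where "T = 1 / Z0^2"
  have T0: "T > 0" using Z0p by (simp add: T_def)
  obtain L B where LB: "L \<ge> 0" "\<And>z w. norm (ham_field (cl z) - ham_field (cl w)) \<le> L * norm (z - w)"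
      "\<And>z. norm (ham_field (cl z)) \<le> B"
    using G_lip by blast
  obtain x where x0: "x 0 = z0" and xd: "\<And>t. t \<in> {0..T} \<Longrightarrow> (x has_vector_derivative ham_field (cl (x t))) (at t within {0..T})"
    using picard_exists[of "\<lambda>z. ham_field (cl z)" L B T z0] LB T0 by auto
  have xc: "continuous_on {0..T} x"
    using xd has_vector_derivative_continuous continuous_on_eq_continuous_within by blast
  define S where "S = {0..T} \<inter> x -` (- Ubox)"
  have Sne: "S \<noteq> {}"
  proof
    assume S0: "S = {}"
    have inU: "x t \<in> Ubox" if "t \<in> {0..T}" for t using S0 that unfolding S_def by auto
    have "3 * (Zf (-\<delta>) 0 \<delta> 0)^2 * T \<le> 8/100"
    proof (rule chetaev[of T x \<delta>])
      show "0 \<le> T" using T0 by simp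
      show "x 0 = (-\<delta>, 0, \<delta>, 0)" using x0 by (simp add: z0_def)
      show "0 < \<delta>" "\<delta> \<le> 1/10" by (rule dpos(1), rule dpos(2))
      fix t assume t: "t \<in> {0..T}"
      have K: "x t \<in> Kbox" using inU[OF t] Ubox_Kbox by auto
      show "(x has_vector_derivative ham_field (x t)) (at t within {0..T})"
        using xd[OF t] cl_id[OF K] by simp
      show "\<bar>fst (x t)\<bar> \<le> 1/10 \<and> \<bar>fst (snd (x t))\<bar> \<le> 1/10 \<and> \<bar>fst (snd (snd (x t)))\<bar> \<le> 1/10 \<and> \<bar>snd (snd (snd (x t)))\<bar> \<le> 1/10"
        using K by (simp add: Kbox_def)
    qed
    moreover have "3 * (Zf (-\<delta>) 0 \<delta> 0)^2 * T = 3" using Z0p unfolding T_def Z0_def[symmetric] by simp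
    ultimately show False by simp
  qed
  have Sc: "closed S" unfolding S_def
    using continuous_closed_preimage[OF xc closed_atLeastAtMost, of "- Ubox"] open_Ubox by (simp add: closed_Compl)
  have Sb: "bdd_below S" unfolding S_def by (rule bdd_belowI[of _ 0]) auto
  define ts where "ts = Inf S"
  have tsS: "ts \<in> S" unfolding ts_def using closed_contains_Inf[OF Sne Sb Sc] .
  have ts0: "0 \<le> ts" "ts \<le> T" using tsS unfolding S_def by auto
  have xts: "x ts \<notin> Ubox" using tsS unfolding S_def by auto
  have before: "x s \<in> Ubox" if "0 \<le> s" "s < ts" for s
  proof (rule ccontr)
    assume "x s \<notin> Ubox"
    then have "s \<in> S" using that ts0 unfolding S_def by auto
    then have "ts \<le> s" unfolding ts_def using Sb by (rule cInf_lower)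
    then show False using that by simp
  qed
  have tspos: "ts > 0"
  proof (rule ccontr)
    assume "\<not> ts > 0" then have "ts = 0" using ts0 by simp
    then show False using xts x0 z0U by simp
  qed
  have xtsK: "x ts \<in> Kbox"
  proof -
    have cs: "continuous_on {0..ts} x" using xc ts0 by (elim continuous_on_subset) auto
    have clC: "closed ({0..ts} \<inter> x -` Kbox)"
      by (rule continuous_closed_preimage[OF cs closed_atLeastAtMost closed_Kbox])
    have sub: "{0..<ts} \<subseteq> {0..ts} \<inter> x -` Kbox" using before Ubox_Kbox by fastforce
    have "closure {0..<ts} \<subseteq> {0..ts} \<inter> x -` Kbox" by (rule closure_minimal[OF sub clC])
    moreover have "closure {0..<ts} = {0..ts}" using tspos by (simp add: closure_atLeastLessThan)
    ultimately show ?thesis using ts0 by auto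
  qed
  have inK: "x s \<in> Kbox" if "s \<in> {0..ts}" for s
  proof (cases "s < ts")
    case True then show ?thesis using before[of s] that Ubox_Kbox by auto
  next
    case False then have "s = ts" using that by auto
    then show ?thesis using xtsK by simp
  qed
  show "\<exists>x T. T \<ge> 0 \<and> x 0 \<in> W \<and> ham_solution x T \<and> x T \<notin> Ubox"
  proof (intro exI conjI)
    show "ts \<ge> 0" by (rule ts0(1))
    show "x 0 \<in> W" using x0 z0W by simp
    show "x ts \<notin> Ubox" by (rule xts)
    show "ham_solution x ts" unfolding ham_solution_def
    proof
      fix s assume s: "s \<in> {0..ts}"
      have sT: "s \<in> {0..T}" using s ts0 by auto
      have "(x has_vector_derivative ham_field (cl (x s))) (at s within {0..ts})"
        by (rule has_vector_derivative_within_subset[OF xd[OF sT]]) (use ts0 in auto)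
      then show "(x has_vector_derivative ham_field (x s)) (at s within {0..ts})"
        using cl_id[OF inK[OF s]] by simp
    qed
  qed
  qed
  show ?thesis
  proof (rule exI[of _ Ubox], intro conjI)
    show "open Ubox" by (rule open_Ubox)
    show "0 \<in> Ubox" by (simp add: Ubox_def)
    show "\<forall>W. open W \<and> 0 \<in> W \<longrightarrow> (\<exists>x T. T \<ge> 0 \<and> x 0 \<in> W \<and> ham_solution x T \<and> x T \<notin> Ubox)"
      using main by blast
  qed
qed

end
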